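(* Let $R_i=(\mathcal{F}_i,\mathcal{V}_i,\mathcal{R}_i)$, $i=1,2$, be TRSs. (a) If $R_1,R_2$ are in $\mathcal{V}$-normal form, then $R_1\cong_{\mathbf{SE}}R_2$ if and only if their $\mathcal{V}$-templates are $\mathcal{F}$-globally isomorphic, i.e. $(\mathcal{F}_1,\mathcal{V}_1^S,\nu^{R_1}(\mathcal{R}_1))\cong_{\mathbf{GFE}}(\mathcal{F}_2,\mathcal{V}_2^S,\nu^{R_2}(\mathcal{R}_2))$. (b) If $R_1,R_2$ are in $\mathcal{F}$-normal form, then $R_1\cong_{\mathbf{SVE}}R_2$ if and only if their $\mathcal{F}$-templates are $\mathcal{V}$-globally isomorphic, i.e. $(\mathcal{F}_1^S,\mathcal{V}_1,\mu^{R_1}(\mathcal{R}_1))\cong_{\mathbf{GVE}}(\mathcal{F}_2^S,\mathcal{V}_2,\mu^{R_2}(\mathcal{R}_2))$.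
   Context: Terms and TRSs: $\mathcal{F}$ is a finite set of function symbols with arity map $\mathrm{ar}:\mathcal{F}\to\mathbb{N}_0$, $\mathcal{V}$ a finite set of variables disjoint from $\mathcal{F}$, and $T(\mathcal{F},\mathcal{V})$ the usual set of first-order terms over them. A term rewriting system (TRS) is a triple $R=(\mathcal{F},\mathcal{V},\mathcal{R})$ where $\mathcal{R}$ is a finite set of rules $\ell\to r$ with $\ell,r\in T(\mathcal{F},\mathcal{V})$, $\ell\notin\mathcal{V}$ and every variable of $r$ occurs in $\ell$; $\mathcal{F}$ and $\mathcal{V}$ contain all symbols occurring in the rules. Term isomorphisms: a term isomorphism $\phi:T(\mathcal{F},\mathcal{V})\to T(\mathcal{F}',\mathcal{V}')$ is a pair of bijections $\phi_{\mathcal{F}}:\mathcal{F}\to\mathcal{F}'$ with $\mathrm{ar}'(\phi_{\mathcal{F}}(f))=\mathrm{ar}(f)$ for all $f$, and $\phi_{\mathcal{V}}:\mathcal{V}\to\mathcal{V}'$, extended homomorphically to terms. We write $\phi|_{\mathcal{F}}=\phi_{\mathcal{F}}$, $\phi|_{\mathcal{V}}=\phi_{\mathcal{V}}$. It is $\mathcal{V}$-invariant if $\mathcal{V}=\mathcal{V}'$ and $\phi_{\mathcal{V}}=\mathrm{id}$, and $\mathcal{F}$-invariant if $\mathcal{F}=\mathcal{F}'$ (with equal arities) and $\phi_{\mathcal{F}}=\mathrm{id}$. Normal forms: two distinct rules $\ell\to r$, $\ell'\to r'$ of $\mathcal{R}$ are $\mathcal{V}$-equivalent (resp. $\mathcal{F}$-equivalent)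 if there is an $\mathcal{F}$-invariant (resp. a $\mathcal{V}$-invariant) term isomorphism $\phi:T(\mathcal{F},\mathcal{V})\to T(\mathcal{F},\mathcal{V})$ with $\phi(\ell)=\ell'$ and $\phi(r)=r'$. $R$ is in $\mathcal{V}$-normal form (resp. $\mathcal{F}$-normal form) if $\mathcal{R}$ contains no pair of $\mathcal{V}$-equivalent (resp. $\mathcal{F}$-equivalent) rules. TRS isomorphisms (for $R=(\mathcal{F},\mathcal{V},\mathcal{R})$, $\mathcal{R}=\{\ell_1\to r_1,\dots,\ell_n\to r_n\}$, $R'=(\mathcal{F}',\mathcal{V}',\mathcal{R}')$, $\phi(\mathcal{R})=\{\phi(\ell)\to\phi(r):\ell\to r\in\mathcal{R}\}$): $R\cong_{\mathbf{GVE}}R'$ (resp. $R\cong_{\mathbf{GFE}}R'$) if there is an $\mathcal{F}$-invariant (resp. $\mathcal{V}$-invariant) term isomorphism $\phi:T(\mathcal{F},\mathcal{V})\to T(\mathcal{F}',\mathcal{V}')$ with $\phi(\mathcal{R})=\mathcal{R}'$. A local isomorphism is a family $(\phi_1,\dots,\phi_n)$ of term isomorphisms $T(\mathcal{F},\mathcal{V})\to T(\mathcal{F}',\mathcal{V}')$ with $\{\phi_i(\ell_i)\to\phi_i(r_i):1\le i\le n\}=\mathcal{R}'$. $R\cong_{\mathbf{SVE}}R'$ if both are in $\mathcal{F}$-normal form and there is a local isomorphism with $\phi_1|_{\mathcal{V}}=\dots=\phi_n|_{\mathcal{V}}$; $R\cong_{\mathbf{SE}}R'$ if both are in $\mathcal{V}$-normal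 form and there is a local isomorphism with $\phi_1|_{\mathcal{F}}=\dots=\phi_n|_{\mathcal{F}}$. Templates: let $\mathcal{R}=\{\ell_1\to r_1,\dots,\ell_n\to r_n\}$. The standardised variable set is $\mathcal{V}^S=\{x_1,\dots,x_K\}$ with $K=|\mathcal{V}|$; the standardised function symbol set is $\mathcal{F}^S=\{f_{k,l}: l\in L,1\le k\le p_l\}$, where $L=\{\mathrm{ar}(f):f\in\mathcal{F}\}$, $p_l=|\{f\in\mathcal{F}:\mathrm{ar}(f)=l\}|$ and $\mathrm{ar}(f_{k,l})=l$. For each $j$, $\nu_j:T(\mathcal{F},\mathcal{V})\to T(\mathcal{F},\mathcal{V}^S)$ is the $\mathcal{F}$-invariant term isomorphism sending the $k$-th distinct variable of $\ell_j$ (ordered by first occurrence, reading $\ell_j$ left to right) to $x_k$, and the remaining variables of $\mathcal{V}$ bijectively (in a fixed order) to the remaining $x_k$. $\mu_j:T(\mathcal{F},\mathcal{V})\to T(\mathcal{F}^S,\mathcal{V})$ is the $\mathcal{V}$-invariant term isomorphism sending, for each arity $l$, the $k$-th distinct function symbol of arity $l$ occurring in the string $\ell_j r_j$ (ordered by first occurrence, left to right) to $f_{k,l}$, and the remaining symbols of each arity $l$ bijectively (in a fixed order) to the remaining $f_{k,l}$. The template sets are $\nu(\mathcal{R})=\{\nu_j(\ell_j)\to\nu_j(r_j):1\le j\le n\}$ and $\mu(\mathcal{R})=\{\mu_j(\ell_j)\to\mu_j(r_j):1\le j\le n\}$. Superscripts $\nu^{R_i},\mathcal{V}_i^S$, etc.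 indicate the TRS these are computed for. *)

theory Defs
  imports Main
begin

datatype ('f, 'v) trm = Var 'v | Fun 'f "('f, 'v) trm list"

type_synonym ('f, 'v) rule = "('f, 'v) trm \<times> ('f, 'v) trm"

fun vars_list :: "('f, 'v) trm \<Rightarrow> 'v list" where
  "vars_list (Var x) = [x]"
| "vars_list (Fun f ts) = concat (map vars_list ts)"

fun funs_list :: "('f, 'v) trm \<Rightarrow> 'f list" where
  "funs_list (Var x) = []"
| "funs_list (Fun f ts) = f # concat (map funs_list ts)"

definition vars_trm :: "('f, 'v) trm \<Rightarrow> 'v set" where
  "vars_trm t = set (vars_list t)"

fun wf_trm :: "'f set \<Rightarrow> ('f \<Rightarrow> nat) \<Rightarrow> 'v set \<Rightarrow> ('f, 'v) trm \<Rightarrow> bool" where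
  "wf_trm F ar V (Var x) = (x \<in> V)"
| "wf_trm F ar V (Fun f ts) = (f \<in> F \<and> length ts = ar f \<and> (\<forall>t \<in> set ts. wf_trm F ar V t))"

definition map_rule :: "('f \<Rightarrow> 'g) \<Rightarrow> ('v \<Rightarrow> 'w) \<Rightarrow> ('f, 'v) rule \<Rightarrow> ('g, 'w) rule" where
  "map_rule g h \<rho> = (map_trm g h (fst \<rho>), map_trm g h (snd \<rho>))"

record ('f, 'v) trs =
  funs :: "'f set"
  arity :: "'f \<Rightarrow> nat"
  vars :: "'v set"
  rules :: "('f, 'v) rule set"

definition is_trs :: "('f, 'v) trs \<Rightarrow> bool" where
  "is_trs R \<longleftrightarrow> finite (funs R) \<and> finite (vars R) \<and> finite (rules R) \<and>
     (\<forall>(l, r) \<in> rules R. (\<exists>f ts. l = Fun f ts) \<and> vars_trm r \<subseteq> vars_trm l \<and>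
        wf_trm (funs R) (arity R) (vars R) l \<and> wf_trm (funs R) (arity R) (vars R) r)"

text \<open>(g, h) are the components of a term isomorphism T(F,V) \<rightarrow> T(F',V').\<close>
definition term_iso ::
  "'f set \<Rightarrow> ('f \<Rightarrow> nat) \<Rightarrow> 'v set \<Rightarrow> 'g set \<Rightarrow> ('g \<Rightarrow> nat) \<Rightarrow> 'w set \<Rightarrow>
   ('f \<Rightarrow> 'g) \<Rightarrow> ('v \<Rightarrow> 'w) \<Rightarrow> bool" where
  "term_iso F ar V F' ar' V' g h \<longleftrightarrow>
     bij_betw g F F' \<and> (\<forall>f \<in> F. ar' (g f) = ar f) \<and> bij_betw h V V'"

definition V_equiv :: "('f, 'v) trs \<Rightarrow> ('f, 'v) rule \<Rightarrow> ('f, 'v) rule \<Rightarrow> bool" where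
  "V_equiv R \<rho> \<rho>' \<longleftrightarrow>
     (\<exists>h. term_iso (funs R) (arity R) (vars R) (funs R) (arity R) (vars R) id h \<and>
          map_rule id h \<rho> = \<rho>')"

definition F_equiv :: "('f, 'v) trs \<Rightarrow> ('f, 'v) rule \<Rightarrow> ('f, 'v) rule \<Rightarrow> bool" where
  "F_equiv R \<rho> \<rho>' \<longleftrightarrow>
     (\<exists>g. term_iso (funs R) (arity R) (vars R) (funs R) (arity R) (vars R) g id \<and>
          map_rule g id \<rho> = \<rho>')"

definition V_normal :: "('f, 'v) trs \<Rightarrow> bool" where
  "V_normal R \<longleftrightarrow> (\<forall>\<rho> \<in> rules R. \<forall>\<rho>' \<in> rules R. \<rho> \<noteq> \<rho>' \<longrightarrow> \<not> V_equiv R \<rho> \<rho>')"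

definition F_normal :: "('f, 'v) trs \<Rightarrow> bool" where
  "F_normal R \<longleftrightarrow> (\<forall>\<rho> \<in> rules R. \<forall>\<rho>' \<in> rules R. \<rho> \<noteq> \<rho>' \<longrightarrow> \<not> F_equiv R \<rho> \<rho>')"

definition GVE_iso :: "('f, 'v) trs \<Rightarrow> ('f, 'w) trs \<Rightarrow> bool" where
  "GVE_iso R R' \<longleftrightarrow> funs R = funs R' \<and> (\<forall>f \<in> funs R. arity R' f = arity R f) \<and>
     (\<exists>h. term_iso (funs R) (arity R) (vars R) (funs R') (arity R') (vars R') id h \<and>
          map_rule id h ` rules R = rules R')"

definition GFE_iso :: "('f, 'v) trs \<Rightarrow> ('g, 'v) trs \<Rightarrow> bool" where
  "GFE_iso R R' \<longleftrightarrow> vars R = vars R' \<and>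
     (\<exists>g. term_iso (funs R) (arity R) (vars R) (funs R') (arity R') (vars R') g id \<and>
          map_rule g id ` rules R = rules R')"

definition local_iso :: "('f, 'v) trs \<Rightarrow> ('g, 'w) trs \<Rightarrow>
    (('f, 'v) rule \<Rightarrow> 'f \<Rightarrow> 'g) \<Rightarrow> (('f, 'v) rule \<Rightarrow> 'v \<Rightarrow> 'w) \<Rightarrow> bool" where
  "local_iso R R' G H \<longleftrightarrow>
     (\<forall>\<rho> \<in> rules R. term_iso (funs R) (arity R) (vars R) (funs R') (arity R') (vars R') (G \<rho>) (H \<rho>)) \<and>
     (\<lambda>\<rho>. map_rule (G \<rho>) (H \<rho>) \<rho>) ` rules R = rules R'"

definition SVE_iso :: "('f, 'v) trs \<Rightarrow> ('g, 'w) trs \<Rightarrow> bool" where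
  "SVE_iso R R' \<longleftrightarrow> F_normal R \<and> F_normal R' \<and>
     (\<exists>G h. local_iso R R' G (\<lambda>_. h))"

definition SE_iso :: "('f, 'v) trs \<Rightarrow> ('g, 'w) trs \<Rightarrow> bool" where
  "SE_iso R R' \<longleftrightarrow> V_normal R \<and> V_normal R' \<and>
     (\<exists>g H. local_iso R R' (\<lambda>_. g) H)"

text \<open>Position of an element in a list (0-based); only used for elements of the list.\<close>
fun pos :: "'a list \<Rightarrow> 'a \<Rightarrow> nat" where
  "pos [] x = 0"
| "pos (y # ys) x = (if x = y then 0 else Suc (pos ys x))"

text \<open>Standardised variables x_1,...,x_K are represented by the naturals 1,...,K.\<close>
definition nu_var :: "('f, 'v) trm \<Rightarrow> 'v \<Rightarrow> nat" where
  "nu_var l v = Suc (pos (remdups (vars_list l)) v)"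

definition nu_rule :: "('f, 'v) rule \<Rightarrow> ('f, nat) rule" where
  "nu_rule \<rho> = map_rule id (nu_var (fst \<rho>)) \<rho>"

definition nu_template :: "('f, 'v) trs \<Rightarrow> ('f, nat) trs" where
  "nu_template R = \<lparr> funs = funs R, arity = arity R, vars = {1 .. card (vars R)},
      rules = nu_rule ` rules R \<rparr>"

text \<open>Standardised function symbols f_{k,l} are represented by the pairs (k, l), with arity l.\<close>
definition std_funs :: "'f set \<Rightarrow> ('f \<Rightarrow> nat) \<Rightarrow> (nat \<times> nat) set" where
  "std_funs F ar = {(k, l). l \<in> ar ` F \<and> 1 \<le> k \<and> k \<le> card {f \<in> F. ar f = l}}"

definition mu_fun :: "('f \<Rightarrow> nat) \<Rightarrow> ('f, 'v) rule \<Rightarrow> 'f \<Rightarrow> nat \<times> nat" where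
  "mu_fun ar \<rho> f =
     (Suc (pos (filter (\<lambda>g. ar g = ar f) (remdups (funs_list (fst \<rho>) @ funs_list (snd \<rho>)))) f), ar f)"

definition mu_rule :: "('f \<Rightarrow> nat) \<Rightarrow> ('f, 'v) rule \<Rightarrow> (nat \<times> nat, 'v) rule" where
  "mu_rule ar \<rho> = map_rule (mu_fun ar \<rho>) id \<rho>"

definition mu_template :: "('f, 'v) trs \<Rightarrow> (nat \<times> nat, 'v) trs" where
  "mu_template R = \<lparr> funs = std_funs (funs R) (arity R), arity = snd, vars = vars R,
      rules = mu_rule (arity R) ` rules R \<rparr>"

end

theory Submission
  imports Defs
begin

lemma vars_list_map[simp]: "vars_list (map_trm g h t) = map h (vars_list t)"
  by (induction t) (auto simp: map_concat comp_def cong: map_cong)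

lemma funs_list_map[simp]: "funs_list (map_trm g h t) = map g (funs_list t)"
  by (induction t) (auto simp: map_concat comp_def cong: map_cong)

lemma map_trm_cong:
  "(\<And>f. f \<in> set (funs_list t) \<Longrightarrow> g f = g' f) \<Longrightarrow> (\<And>v. v \<in> set (vars_list t) \<Longrightarrow> h v = h' v)
   \<Longrightarrow> map_trm g h t = map_trm g' h' t"
proof (induction t)
  case (Var x) then show ?case by simp
next
  case (Fun f ts) then show ?case by (auto intro!: map_cong)
qed

lemma map_trm_comp: "map_trm g h (map_trm g' h' t) = map_trm (g \<circ> g') (h \<circ> h') t"
  by (simp add: trm.map_comp)

lemma map_trm_id: "map_trm id id t = t"
  by (simp add: trm.map_id)

lemma map_trm_inj:
  assumes "inj_on g (set (funs_list s) \<union> set (funs_list t))"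
    and "inj_on h (set (vars_list s) \<union> set (vars_list t))"
    and "map_trm g h s = map_trm g h t"
  shows "s = t"
proof -
  let ?F = "set (funs_list s) \<union> set (funs_list t)"
  let ?V = "set (vars_list s) \<union> set (vars_list t)"
  have inv: "\<And>u. set (funs_list u) \<subseteq> ?F \<Longrightarrow> set (vars_list u) \<subseteq> ?V \<Longrightarrow>
      map_trm (inv_into ?F g) (inv_into ?V h) (map_trm g h u) = u"
  proof -
    fix u assume a: "set (funs_list u) \<subseteq> ?F" "set (vars_list u) \<subseteq> ?V"
    have "map_trm (inv_into ?F g) (inv_into ?V h) (map_trm g h u)
       = map_trm (inv_into ?F g \<circ> g) (inv_into ?V h \<circ> h) u" by (simp add: map_trm_comp)
    also have "\<dots> = map_trm id id u"
      by (rule map_trm_cong) (use a assms(1,2) in \<open>auto simp: inv_into_f_f\<close>)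
    finally show "map_trm (inv_into ?F g) (inv_into ?V h) (map_trm g h u) = u"
      by (simp add: map_trm_id)
  qed
  have es: "map_trm (inv_into ?F g) (inv_into ?V h) (map_trm g h s) = s" by (rule inv) auto
  have et: "map_trm (inv_into ?F g) (inv_into ?V h) (map_trm g h t) = t" by (rule inv) auto
  have "s = map_trm (inv_into ?F g) (inv_into ?V h) (map_trm g h s)" using es by (rule sym)
  also have "\<dots> = map_trm (inv_into ?F g) (inv_into ?V h) (map_trm g h t)" unfolding assms(3) ..
  also have "\<dots> = t" by (rule et)
  finally show ?thesis .
qed

lemma wf_sub:
  "wf_trm F ar V t \<Longrightarrow> set (funs_list t) \<subseteq> F \<and> set (vars_list t) \<subseteq> V"
  by (induction t) auto

lemma pos_nth: "x \<in> set ys \<Longrightarrow> ys ! pos ys x = x"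
  by (induction ys) auto

lemma pos_inj: "x \<in> set ys \<Longrightarrow> y \<in> set ys \<Longrightarrow> pos ys x = pos ys y \<Longrightarrow> x = y"
  by (metis pos_nth)

lemma pos_map: "inj_on f (set ys) \<Longrightarrow> x \<in> set ys \<Longrightarrow> pos (map f ys) (f x) = pos ys x"
proof (induction ys)
  case Nil then show ?case by simp
next
  case (Cons y ys)
  then show ?case by (cases "x = y") (auto simp: inj_on_def)
qed

lemma ext_bij:
  assumes "finite V" "finite V'" "card V = card V'" "A \<subseteq> V" "A' \<subseteq> V'" "bij_betw h A A'"
  shows "\<exists>H. bij_betw H V V' \<and> (\<forall>a\<in>A. H a = h a)"
proof -
  have cA: "card A = card A'" using assms(6) bij_betw_same_card by blast
  have fA: "finite A" using assms(1,4) finite_subset by blast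
  have fA': "finite A'" using assms(2,5) finite_subset by blast
  have "card (V - A) = card V - card A" using card_Diff_subset[OF fA assms(4)] .
  also have "\<dots> = card V' - card A'" using assms(3) cA by simp
  also have "\<dots> = card (V' - A')" using card_Diff_subset[OF fA' assms(5)] by simp
  finally have "card (V - A) = card (V' - A')" .
  moreover have "finite (V - A)" "finite (V' - A')" using assms(1,2) by auto
  ultimately obtain k where k: "bij_betw k (V - A) (V' - A')"
    using finite_same_card_bij by blast
  have "bij_betw (\<lambda>x. if x \<in> A then h x else k x) (A \<union> (V - A)) (A' \<union> (V' - A'))"
    by (rule bij_betw_disjoint_Un[OF assms(6) k]) auto
  moreover have "A \<union> (V - A) = V" "A' \<union> (V' - A') = V'" using assms by auto
  ultimately show ?thesis by (intro exI[of _ "\<lambda>x. if x \<in> A then h x else k x"]) auto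
qed

lemma ext_bij_col:
  assumes "finite V" "finite V'" "\<And>l. card {v\<in>V. c v = l} = card {v\<in>V'. c' v = l}"
    "A \<subseteq> V" "A' \<subseteq> V'" "bij_betw h A A'" "\<And>a. a \<in> A \<Longrightarrow> c' (h a) = c a"
  shows "\<exists>H. bij_betw H V V' \<and> (\<forall>v\<in>V. c' (H v) = c v) \<and> (\<forall>a\<in>A. H a = h a)"
proof -
  have ex: "\<exists>H. bij_betw H {v\<in>V. c v = l} {v\<in>V'. c' v = l} \<and> (\<forall>a\<in>{v\<in>A. c v = l}. H a = h a)" for l
  proof -
    have img: "h ` {v\<in>A. c v = l} = {v\<in>A'. c' v = l}"
    proof
      show "h ` {v\<in>A. c v = l} \<subseteq> {v\<in>A'. c' v = l}"
        using assms(6,7) unfolding bij_betw_def by auto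
      show "{v\<in>A'. c' v = l} \<subseteq> h ` {v\<in>A. c v = l}"
      proof
        fix w assume w: "w \<in> {v\<in>A'. c' v = l}"
        then obtain a where a: "a \<in> A" "w = h a" using assms(6) unfolding bij_betw_def by auto
        then have "c a = l" using w assms(7)[of a] by simp
        then show "w \<in> h ` {v\<in>A. c v = l}" using a by auto
      qed
    qed
    have inj: "inj_on h {v\<in>A. c v = l}"
      using assms(6) unfolding bij_betw_def by (rule conjE) (erule inj_on_subset, blast)
    have bh: "bij_betw h {v\<in>A. c v = l} {v\<in>A'. c' v = l}"
      unfolding bij_betw_def using img inj by simp
    show ?thesis
      apply (rule ext_bij[OF _ _ _ _ _ bh])
      using assms(1,2,3,4,5) by auto
  qed
  have "\<forall>l. \<exists>H. bij_betw H {v\<in>V. c v = l} {v\<in>V'. c' v = l} \<and> (\<forall>a\<in>{v\<in>A. c v = l}. H a = h a)"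
    using ex by blast
  then have "\<exists>Hs. \<forall>l. bij_betw (Hs l) {v\<in>V. c v = l} {v\<in>V'. c' v = l} \<and> (\<forall>a\<in>{v\<in>A. c v = l}. Hs l a = h a)"
    by (rule choice)
  then obtain Hs where Hs0: "\<forall>l. bij_betw (Hs l) {v\<in>V. c v = l} {v\<in>V'. c' v = l} \<and> (\<forall>a\<in>{v\<in>A. c v = l}. Hs l a = h a)"
    by blast
  have Hs: "\<And>l. bij_betw (Hs l) {v\<in>V. c v = l} {v\<in>V'. c' v = l} \<and> (\<forall>a\<in>{v\<in>A. c v = l}. Hs l a = h a)" using Hs0 by blast
  define H where "H v = Hs (c v) v" for v
  have col: "\<forall>v\<in>V. c' (H v) = c v"
  proof
    fix v assume "v \<in> V"
    then have "v \<in> {w\<in>V. c w = c v}" by simp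
    then have "Hs (c v) v \<in> {w\<in>V'. c' w = c v}" using Hs[of "c v"] unfolding bij_betw_def by blast
    then show "c' (H v) = c v" unfolding H_def by simp
  qed
  have "inj_on H V"
  proof (rule inj_onI)
    fix x y assume xy: "x \<in> V" "y \<in> V" "H x = H y"
    then have cxy: "c x = c y" using col by metis
    have "inj_on (Hs (c x)) {v\<in>V. c v = c x}" using Hs[of "c x"] unfolding bij_betw_def by blast
    moreover have "Hs (c x) x = Hs (c x) y" using xy(3) cxy unfolding H_def by simp
    ultimately show "x = y" using xy(1,2) cxy unfolding inj_on_def by auto
  qed
  moreover have "H ` V = V'"
  proof
    show "H ` V \<subseteq> V'"
    proof
      fix w assume "w \<in> H ` V"
      then obtain v where v: "v \<in> V" "w = H v" by auto
      then have "v \<in> {u\<in>V. c u = c v}" by simp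
      then have "Hs (c v) v \<in> {u\<in>V'. c' u = c v}" using Hs[of "c v"] unfolding bij_betw_def by blast
      then show "w \<in> V'" using v unfolding H_def by simp
    qed
    show "V' \<subseteq> H ` V"
    proof
      fix w assume "w \<in> V'"
      then have "w \<in> Hs (c' w) ` {v\<in>V. c v = c' w}" using Hs[of "c' w"] unfolding bij_betw_def by auto
      then obtain v where v: "v \<in> V" "c v = c' w" "w = Hs (c' w) v" by auto
      then have "w = H v" unfolding H_def by simp
      then show "w \<in> H ` V" using v(1) by blast
    qed
  qed
  moreover have "\<forall>a\<in>A. H a = h a"
  proof
    fix a assume "a \<in> A"
    then have "a \<in> {v\<in>A. c v = c a}" by simp
    then show "H a = h a" using Hs[of "c a"] unfolding H_def by blast
  qed
  ultimately have "bij_betw H V V' \<and> (\<forall>v\<in>V. c' (H v) = c v) \<and> (\<forall>a\<in>A. H a = h a)"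
    using col unfolding bij_betw_def by simp
  then show ?thesis by (rule exI[where x=H])
qed


lemma map_rule_simp: "map_rule g h (l, r) = (map_trm g h l, map_trm g h r)"
  by (simp add: map_rule_def)

lemma map_rule_comp: "map_rule g h (map_rule g' h' \<rho>) = map_rule (g \<circ> g') (h \<circ> h') \<rho>"
  by (simp add: map_rule_def map_trm_comp)

lemma map_rule_id: "map_rule id id \<rho> = \<rho>"
  by (simp add: map_rule_def map_trm_id)

lemma remdups_map_inj: "inj_on f (set xs) \<Longrightarrow> remdups (map f xs) = map f (remdups xs)"
proof (induction xs)
  case Nil then show ?case by simp
next
  case (Cons x xs)
  then have "inj_on f (set xs)" by auto
  moreover have "(f x \<in> f ` set xs) = (x \<in> set xs)" using Cons.prems by (auto simp: inj_on_def)
  ultimately show ?case using Cons by auto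
qed

subsection \<open>nu\<close>

lemma nu_var_map:
  assumes "inj_on H (set (vars_list l))" "v \<in> set (vars_list l)"
  shows "nu_var (map_trm g H l) (H v) = nu_var l v"
proof -
  have "remdups (vars_list (map_trm g H l)) = map H (remdups (vars_list l))"
    using remdups_map_inj[OF assms(1)] by simp
  moreover have "inj_on H (set (remdups (vars_list l)))" using assms(1) by simp
  ultimately show ?thesis unfolding nu_var_def using pos_map assms(2) by fastforce
qed

lemma nu_map:
  assumes "inj_on H (set (vars_list l))" "set (vars_list r) \<subseteq> set (vars_list l)"
  shows "nu_rule (map_rule g H (l, r)) = map_rule g id (nu_rule (l, r))"
proof -
  have eq: "map_trm id (nu_var (map_trm g H l)) (map_trm g H t) = map_trm g id (map_trm id (nu_var l) t)"
    if "set (vars_list t) \<subseteq> set (vars_list l)" for t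
  proof -
    have "map_trm id (nu_var (map_trm g H l)) (map_trm g H t) = map_trm g (nu_var (map_trm g H l) \<circ> H) t"
      by (simp add: map_trm_comp)
    also have "\<dots> = map_trm g (nu_var l) t"
      by (rule map_trm_cong) (use that nu_var_map[OF assms(1)] in auto)
    also have "\<dots> = map_trm g id (map_trm id (nu_var l) t)" by (simp add: map_trm_comp)
    finally show ?thesis .
  qed
  show ?thesis using eq[of l] eq[of r] assms(2) by (simp add: nu_rule_def map_rule_def)
qed

lemma nu_var_inj: "inj_on (nu_var l) (set (vars_list l))"
  unfolding nu_var_def inj_on_def using pos_inj[of _ "remdups (vars_list l)"] by simp

lemma nu_core:
  assumes A: "set (vars_list l) \<subseteq> V1" "set (vars_list r) \<subseteq> set (vars_list l)"
    and A': "set (vars_list l') \<subseteq> V2" "set (vars_list r') \<subseteq> set (vars_list l')"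
    and fin: "finite V1" "finite V2" "card V1 = card V2"
    and eq: "map_rule g id (nu_rule (l, r)) = nu_rule (l', r')"
  shows "\<exists>H. bij_betw H V1 V2 \<and> map_rule g H (l, r) = (l', r')"
proof -
  define n where "n = nu_var l"
  define n' where "n' = nu_var l'"
  let ?A = "set (vars_list l)"
  let ?A' = "set (vars_list l')"
  have eql: "map_trm g n l = map_trm id n' l'" and eqr: "map_trm g n r = map_trm id n' r'"
    using eq by (simp_all add: nu_rule_def map_rule_def map_trm_comp n_def n'_def)
  have img: "n ` ?A = n' ` ?A'"
    using arg_cong[OF eql, of "\<lambda>t. set (vars_list t)"] by simp
  have injn: "inj_on n ?A" and injn': "inj_on n' ?A'" unfolding n_def n'_def by (rule nu_var_inj)+
  define H0 where "H0 = inv_into ?A' n' \<circ> n"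
  have bn: "bij_betw n ?A (n ` ?A)" using injn by (simp add: bij_betw_def)
  have bn': "bij_betw (inv_into ?A' n') (n' ` ?A') ?A'"
    using injn' by (intro bij_betw_inv_into) (simp add: bij_betw_def)
  have bH0: "bij_betw H0 ?A ?A'" unfolding H0_def using bij_betw_trans[OF bn] bn' img by simp
  obtain H where H: "bij_betw H V1 V2" "\<forall>a\<in>?A. H a = H0 a"
    using ext_bij[OF fin A(1) A'(1) bH0] by blast
  have nH: "n' (H a) = n a" if "a \<in> ?A" for a
  proof -
    have "n a \<in> n' ` ?A'" using that img by blast
    then show ?thesis using H(2) that unfolding H0_def by (simp add: f_inv_into_f)
  qed
  have HA: "H ` ?A \<subseteq> ?A'" using H(2) bH0 unfolding bij_betw_def by auto
  have key: "map_trm g H t = t'" if t: "set (vars_list t) \<subseteq> ?A" and t': "set (vars_list t') \<subseteq> ?A'"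
    and e: "map_trm g n t = map_trm id n' t'" for t t'
  proof (rule map_trm_inj[where g = id and h = n'])
    show "inj_on id (set (funs_list (map_trm g H t)) \<union> set (funs_list t'))" by simp
    have "set (vars_list (map_trm g H t)) \<subseteq> ?A'" using t HA by auto
    then show "inj_on n' (set (vars_list (map_trm g H t)) \<union> set (vars_list t'))"
      using t' injn' inj_on_subset by (metis Un_least)
    have "map_trm id n' (map_trm g H t) = map_trm g (n' \<circ> H) t" by (simp add: map_trm_comp)
    also have "\<dots> = map_trm g n t" by (rule map_trm_cong) (use t nH in auto)
    finally show "map_trm id n' (map_trm g H t) = map_trm id n' t'" using e by simp
  qed
  have "map_trm g H l = l'" by (rule key) (use eql in auto)
  moreover have "map_trm g H r = r'" by (rule key) (use eqr A(2) A'(2) in auto)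
  ultimately show ?thesis using H(1) by (auto simp: map_rule_def)
qed


subsection \<open>mu\<close>

lemma mu_fun_map:
  assumes inj: "inj_on G (set (funs_list l) \<union> set (funs_list r))"
    and ar: "\<forall>f \<in> set (funs_list l) \<union> set (funs_list r). ar2 (G f) = ar1 f"
    and f: "f \<in> set (funs_list l) \<union> set (funs_list r)"
  shows "mu_fun ar2 (map_rule G h (l, r)) (G f) = mu_fun ar1 (l, r) f"
proof -
  let ?L = "funs_list l @ funs_list r"
  let ?B = "set (funs_list l) \<union> set (funs_list r)"
  have injL: "inj_on G (set ?L)" using inj by simp
  have rd: "remdups (funs_list (map_trm G h l) @ funs_list (map_trm G h r)) = map G (remdups ?L)"
    using remdups_map_inj[OF injL] by simp
  have flt: "filter (\<lambda>g. ar2 g = ar2 (G f)) (map G (remdups ?L))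
     = map G (filter (\<lambda>g. ar1 g = ar1 f) (remdups ?L))"
  proof -
    have "filter (\<lambda>g. ar2 g = ar2 (G f)) (map G (remdups ?L))
        = map G (filter ((\<lambda>g. ar2 g = ar2 (G f)) \<circ> G) (remdups ?L))" by (rule filter_map)
    also have "filter ((\<lambda>g. ar2 g = ar2 (G f)) \<circ> G) (remdups ?L) = filter (\<lambda>g. ar1 g = ar1 f) (remdups ?L)"
      by (rule filter_cong) (use ar f in auto)
    finally show ?thesis .
  qed
  have injF: "inj_on G (set (filter (\<lambda>g. ar1 g = ar1 f) (remdups ?L)))"
    using injL by (rule inj_on_subset) auto
  have fin: "f \<in> set (filter (\<lambda>g. ar1 g = ar1 f) (remdups ?L))" using f by simp
  show ?thesis
    unfolding mu_fun_def map_rule_def fst_conv snd_conv rd flt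
    using pos_map[OF injF fin] ar f by simp
qed

lemma mu_map:
  assumes inj: "inj_on G (set (funs_list l) \<union> set (funs_list r))"
    and ar: "\<forall>f \<in> set (funs_list l) \<union> set (funs_list r). ar2 (G f) = ar1 f"
  shows "mu_rule ar2 (map_rule G h (l, r)) = map_rule id h (mu_rule ar1 (l, r))"
proof -
  define M where "M = mu_fun ar2 (map_rule G h (l, r))"
  define N where "N = mu_fun ar1 (l, r)"
  have MN: "M (G f) = N f" if "f \<in> set (funs_list l) \<union> set (funs_list r)" for f
    unfolding M_def N_def using mu_fun_map[OF inj ar that] .
  have eq: "map_trm M id (map_trm G h t) = map_trm id h (map_trm N id t)"
    if t: "set (funs_list t) \<subseteq> set (funs_list l) \<union> set (funs_list r)" for t
  proof -
    have "map_trm M id (map_trm G h t) = map_trm (M \<circ> G) (id \<circ> h) t"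
      by (rule map_trm_comp)
    also have "\<dots> = map_trm (id \<circ> N) (h \<circ> id) t"
    proof (rule map_trm_cong)
      fix f assume "f \<in> set (funs_list t)"
      then show "(M \<circ> G) f = (id \<circ> N) f" using MN t by auto
    qed simp
    also have "\<dots> = map_trm id h (map_trm N id t)" by (rule map_trm_comp[symmetric])
    finally show ?thesis .
  qed
  have "mu_rule ar2 (map_rule G h (l, r)) = map_rule M id (map_trm G h l, map_trm G h r)"
    by (simp only: mu_rule_def M_def map_rule_simp)
  also have "\<dots> = (map_trm M id (map_trm G h l), map_trm M id (map_trm G h r))"
    by (rule map_rule_simp)
  also have "\<dots> = (map_trm id h (map_trm N id l), map_trm id h (map_trm N id r))"
    using eq[of l] eq[of r] by simp
  also have "\<dots> = map_rule id h (mu_rule ar1 (l, r))"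
    by (simp only: mu_rule_def N_def map_rule_simp)
  finally show ?thesis .
qed

lemma mu_fun_inj: "inj_on (mu_fun ar (l, r)) (set (funs_list l) \<union> set (funs_list r))"
proof (rule inj_onI)
  fix f f' assume f: "f \<in> set (funs_list l) \<union> set (funs_list r)" and f': "f' \<in> set (funs_list l) \<union> set (funs_list r)"
    and e: "mu_fun ar (l, r) f = mu_fun ar (l, r) f'"
  define L where "L = remdups (funs_list l @ funs_list r)"
  define P where "P = filter (\<lambda>g. ar g = ar f) L"
  have e2: "(Suc (pos (filter (\<lambda>g. ar g = ar f) L) f), ar f) = (Suc (pos (filter (\<lambda>g. ar g = ar f') L) f'), ar f')"
    using e unfolding mu_fun_def L_def fst_conv snd_conv .
  have a: "ar f = ar f'" using e2 by (rule Pair_inject)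
  have p: "pos P f = pos P f'" using e2 unfolding P_def a by (rule Pair_inject) simp
  have "f \<in> set P" using f unfolding P_def L_def by simp
  moreover have "f' \<in> set P" using f' a unfolding P_def L_def by simp
  ultimately show "f = f'" using p by (rule pos_inj)
qed

lemma mu_core:
  assumes A: "set (funs_list l) \<union> set (funs_list r) \<subseteq> F1"
    and A': "set (funs_list l') \<union> set (funs_list r') \<subseteq> F2"
    and fin: "finite F1" "finite F2" "\<And>k. card {f\<in>F1. ar1 f = k} = card {f\<in>F2. ar2 f = k}"
    and eq: "map_rule id h (mu_rule ar1 (l, r)) = mu_rule ar2 (l', r')"
  shows "\<exists>G. bij_betw G F1 F2 \<and> (\<forall>f\<in>F1. ar2 (G f) = ar1 f) \<and> map_rule G h (l, r) = (l', r')"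
proof -
  define m where "m = mu_fun ar1 (l, r)"
  define m' where "m' = mu_fun ar2 (l', r')"
  let ?A = "set (funs_list l) \<union> set (funs_list r)"
  let ?A' = "set (funs_list l') \<union> set (funs_list r')"
  have e1: "mu_rule ar1 (l, r) = (map_trm m id l, map_trm m id r)"
    by (simp only: mu_rule_def m_def map_rule_simp)
  have e2: "mu_rule ar2 (l', r') = (map_trm m' id l', map_trm m' id r')"
    by (simp only: mu_rule_def m'_def map_rule_simp)
  have "(map_trm id h (map_trm m id l), map_trm id h (map_trm m id r)) = (map_trm m' id l', map_trm m' id r')"
    using eq unfolding e1 e2 map_rule_simp .
  then have eql: "map_trm m h l = map_trm m' id l'" and eqr: "map_trm m h r = map_trm m' id r'"
    by (simp_all add: map_trm_comp)
  have img: "m ` ?A = m' ` ?A'"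
    using arg_cong[OF eql, of "\<lambda>t. set (funs_list t)"] arg_cong[OF eqr, of "\<lambda>t. set (funs_list t)"]
    by (simp add: image_Un)
  have injn: "inj_on m ?A" and injn': "inj_on m' ?A'" unfolding m_def m'_def by (rule mu_fun_inj)+
  have snd_m: "snd (m f) = ar1 f" for f unfolding m_def mu_fun_def by simp
  have snd_m': "snd (m' f) = ar2 f" for f unfolding m'_def mu_fun_def by simp
  define G0 where "G0 = inv_into ?A' m' \<circ> m"
  have bn: "bij_betw m ?A (m ` ?A)" using injn by (simp add: bij_betw_def)
  have bn': "bij_betw (inv_into ?A' m') (m' ` ?A') ?A'"
    using injn' by (intro bij_betw_inv_into) (simp add: bij_betw_def)
  have bG0: "bij_betw G0 ?A ?A'" unfolding G0_def using bij_betw_trans[OF bn] bn' img by simp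
  have mG: "m' (G0 a) = m a" if "a \<in> ?A" for a
  proof -
    have "m a \<in> m' ` ?A'" using that img by blast
    then show ?thesis unfolding G0_def by (simp add: f_inv_into_f)
  qed
  have arG0: "ar2 (G0 a) = ar1 a" if "a \<in> ?A" for a
  proof -
    have "snd (m' (G0 a)) = snd (m a)" using mG[OF that] by simp
    then show ?thesis by (simp add: snd_m snd_m')
  qed
  obtain G where G: "bij_betw G F1 F2" "\<forall>v\<in>F1. ar2 (G v) = ar1 v" "\<forall>a\<in>?A. G a = G0 a"
    using ext_bij_col[OF fin A A' bG0 arG0] by blast
  have GA: "G ` ?A \<subseteq> ?A'" using G(3) bG0 unfolding bij_betw_def by auto
  have mGa: "m' (G a) = m a" if "a \<in> ?A" for a using G(3) mG that by simp
  have key: "map_trm G h t = t'" if t: "set (funs_list t) \<subseteq> ?A" and t': "set (funs_list t') \<subseteq> ?A'"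
    and e: "map_trm m h t = map_trm m' id t'" for t t'
  proof (rule map_trm_inj[where g = m' and h = id])
    show "inj_on id (set (vars_list (map_trm G h t)) \<union> set (vars_list t'))" by simp
    have "set (funs_list (map_trm G h t)) \<subseteq> ?A'" using t GA by auto
    then show "inj_on m' (set (funs_list (map_trm G h t)) \<union> set (funs_list t'))"
      using t' injn' inj_on_subset by (metis Un_least)
    have "map_trm m' id (map_trm G h t) = map_trm (m' \<circ> G) h t" by (simp add: map_trm_comp)
    also have "\<dots> = map_trm m h t" by (rule map_trm_cong) (use t mGa in auto)
    finally show "map_trm m' id (map_trm G h t) = map_trm m' id t'" using e by simp
  qed
  have "map_trm G h l = l'" by (rule key[OF _ _ eql]) auto
  moreover have "map_trm G h r = r'" by (rule key[OF _ _ eqr]) auto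
  ultimately have "bij_betw G F1 F2 \<and> (\<forall>f\<in>F1. ar2 (G f) = ar1 f) \<and> map_rule G h (l, r) = (l', r')"
    using G(1,2) by (simp add: map_rule_simp)
  then show ?thesis by (rule exI[where x=G])
qed


lemma trs_rule:
  assumes "is_trs R" "(l, r) \<in> rules R"
  shows "set (vars_list l) \<subseteq> vars R \<and> set (vars_list r) \<subseteq> set (vars_list l) \<and>
         set (funs_list l) \<union> set (funs_list r) \<subseteq> funs R"
proof -
  have "vars_trm r \<subseteq> vars_trm l" "wf_trm (funs R) (arity R) (vars R) l" "wf_trm (funs R) (arity R) (vars R) r"
    using assms unfolding is_trs_def by auto
  then show ?thesis using wf_sub unfolding vars_trm_def by blast
qed

lemma std_char:
  assumes "finite F"
  shows "{k. (k, l) \<in> std_funs F ar} = {1..card {f\<in>F. ar f = l}}"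
proof (cases "l \<in> ar ` F")
  case True then show ?thesis unfolding std_funs_def by auto
next
  case False
  then have "{f\<in>F. ar f = l} = {}" by auto
  then have c: "card {f\<in>F. ar f = l} = 0" by (simp only: card.empty)
  show ?thesis using False unfolding std_funs_def c by auto
qed

lemma std_alt:
  assumes "finite F"
  shows "std_funs F ar = {(k, l). k \<in> {1..card {f\<in>F. ar f = l}}}"
proof -
  have "(k, l) \<in> std_funs F ar \<longleftrightarrow> k \<in> {1..card {f\<in>F. ar f = l}}" for k l
    using std_char[OF assms, of l ar] by blast
  then show ?thesis by auto
qed

lemma std_eq_iff:
  assumes "finite F1" "finite F2"
  shows "std_funs F1 ar1 = std_funs F2 ar2 \<longleftrightarrow> (\<forall>k. card {f\<in>F1. ar1 f = k} = card {f\<in>F2. ar2 f = k})"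
proof
  assume e: "std_funs F1 ar1 = std_funs F2 ar2"
  show "\<forall>k. card {f\<in>F1. ar1 f = k} = card {f\<in>F2. ar2 f = k}"
  proof
    fix k
    have "{1..card {f\<in>F1. ar1 f = k}} = {k'. (k', k) \<in> std_funs F1 ar1}"
      using std_char[OF assms(1), of k ar1] by (rule sym)
    also have "\<dots> = {k'. (k', k) \<in> std_funs F2 ar2}" using e by simp
    also have "\<dots> = {1..card {f\<in>F2. ar2 f = k}}" by (rule std_char[OF assms(2)])
    finally have "{1..card {f\<in>F1. ar1 f = k}} = {1..card {f\<in>F2. ar2 f = k}}" .
    then have "card {1..card {f\<in>F1. ar1 f = k}} = card {1..card {f\<in>F2. ar2 f = k}}" by (rule arg_cong)
    then show "card {f\<in>F1. ar1 f = k} = card {f\<in>F2. ar2 f = k}" by simp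
  qed
next
  assume "\<forall>k. card {f\<in>F1. ar1 f = k} = card {f\<in>F2. ar2 f = k}"
  then show "std_funs F1 ar1 = std_funs F2 ar2"
    unfolding std_alt[OF assms(1)] std_alt[OF assms(2)] by simp
qed

lemma cnt_bij:
  assumes "bij_betw G F1 F2" "\<forall>f\<in>F1. ar2 (G f) = ar1 f"
  shows "card {f\<in>F1. ar1 f = k} = card {f\<in>F2. ar2 f = k}"
proof -
  have img: "G ` {f\<in>F1. ar1 f = k} = {f\<in>F2. ar2 f = k}"
  proof
    show "G ` {f\<in>F1. ar1 f = k} \<subseteq> {f\<in>F2. ar2 f = k}"
      using assms unfolding bij_betw_def by auto
    show "{f\<in>F2. ar2 f = k} \<subseteq> G ` {f\<in>F1. ar1 f = k}"
    proof
      fix w assume w: "w \<in> {f\<in>F2. ar2 f = k}"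
      then obtain a where a: "a \<in> F1" "w = G a" using assms(1) unfolding bij_betw_def by auto
      then have "ar1 a = k" using w assms(2) by auto
      then show "w \<in> G ` {f\<in>F1. ar1 f = k}" using a by auto
    qed
  qed
  have "inj_on G {f\<in>F1. ar1 f = k}"
    using assms(1) unfolding bij_betw_def by (rule conjE) (erule inj_on_subset, blast)
  then have "bij_betw G {f\<in>F1. ar1 f = k} {f\<in>F2. ar2 f = k}" unfolding bij_betw_def using img by simp
  then show ?thesis by (rule bij_betw_same_card)
qed


lemma partA:
  fixes R1 :: "('f1, 'v1) trs" and R2 :: "('f2, 'v2) trs"
  assumes T1: "is_trs R1" and T2: "is_trs R2"
    and ne: "rules R1 \<noteq> {} \<or> rules R2 \<noteq> {}"
    and N1: "V_normal R1" and N2: "V_normal R2"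
  shows "SE_iso R1 R2 \<longleftrightarrow> GFE_iso (nu_template R1) (nu_template R2)"
proof
  assume "SE_iso R1 R2"
  then obtain g H where li: "local_iso R1 R2 (\<lambda>_. g) H" unfolding SE_iso_def by blast
  have ti: "\<And>\<rho>. \<rho> \<in> rules R1 \<Longrightarrow> term_iso (funs R1) (arity R1) (vars R1) (funs R2) (arity R2) (vars R2) g (H \<rho>)"
    using li unfolding local_iso_def by blast
  have img: "(\<lambda>\<rho>. map_rule g (H \<rho>) \<rho>) ` rules R1 = rules R2"
    using li unfolding local_iso_def by blast
  have "rules R1 \<noteq> {}" using ne img by auto
  then obtain \<rho>0 where \<rho>0: "\<rho>0 \<in> rules R1" by blast
  have bg: "bij_betw g (funs R1) (funs R2)" and ar: "\<forall>f\<in>funs R1. arity R2 (g f) = arity R1 f"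
    and bH0: "bij_betw (H \<rho>0) (vars R1) (vars R2)"
    using ti[OF \<rho>0] unfolding term_iso_def by auto
  have card: "card (vars R1) = card (vars R2)" using bH0 by (rule bij_betw_same_card)
  have "nu_rule ` rules R2 = nu_rule ` (\<lambda>\<rho>. map_rule g (H \<rho>) \<rho>) ` rules R1" using img by simp
  also have "\<dots> = (\<lambda>\<rho>. map_rule g id (nu_rule \<rho>)) ` rules R1"
    unfolding image_image
  proof (rule image_cong[OF refl])
    fix \<rho> assume \<rho>: "\<rho> \<in> rules R1"
    obtain l r where lr: "\<rho> = (l, r)" by (cases \<rho>)
    have tr: "set (vars_list l) \<subseteq> vars R1" "set (vars_list r) \<subseteq> set (vars_list l)"
      using trs_rule[OF T1 \<rho>[unfolded lr]] by auto
    have "bij_betw (H \<rho>) (vars R1) (vars R2)" using ti[OF \<rho>] unfolding term_iso_def by blast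
    then have "inj_on (H \<rho>) (set (vars_list l))" using tr(1) unfolding bij_betw_def by (blast intro: inj_on_subset)
    then show "nu_rule (map_rule g (H \<rho>) \<rho>) = map_rule g id (nu_rule \<rho>)"
      unfolding lr by (rule nu_map[OF _ tr(2)])
  qed
  also have "\<dots> = map_rule g id ` nu_rule ` rules R1" by (simp add: image_image)
  finally have E: "map_rule g id ` nu_rule ` rules R1 = nu_rule ` rules R2" by simp
  have "term_iso (funs R1) (arity R1) {1..card (vars R1)} (funs R2) (arity R2) {1..card (vars R2)} g id"
    unfolding term_iso_def using bg ar card by simp
  moreover have "{1..card (vars R1)} = {1..card (vars R2)}" using card by simp
  ultimately have "{1..card (vars R1)} = {1..card (vars R2)} \<and>
     (\<exists>g'. term_iso (funs R1) (arity R1) {1..card (vars R1)} (funs R2) (arity R2) {1..card (vars R2)} g' id \<and>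
          map_rule g' id ` nu_rule ` rules R1 = nu_rule ` rules R2)"
    using E by blast
  then show "GFE_iso (nu_template R1) (nu_template R2)"
    unfolding GFE_iso_def nu_template_def trs.simps .
next
  assume "GFE_iso (nu_template R1) (nu_template R2)"
  then have cv: "{1..card (vars R1)} = {1..card (vars R2)}"
    and "\<exists>g. term_iso (funs R1) (arity R1) {1..card (vars R1)} (funs R2) (arity R2) {1..card (vars R2)} g id \<and>
          map_rule g id ` nu_rule ` rules R1 = nu_rule ` rules R2"
    unfolding GFE_iso_def nu_template_def by simp_all
  then obtain g where tig: "term_iso (funs R1) (arity R1) {1..card (vars R1)} (funs R2) (arity R2) {1..card (vars R2)} g id"
    and E: "map_rule g id ` nu_rule ` rules R1 = nu_rule ` rules R2" by blast
  have bg: "bij_betw g (funs R1) (funs R2)" and ar: "\<forall>f\<in>funs R1. arity R2 (g f) = arity R1 f"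
    using tig unfolding term_iso_def by auto
  have "card {1..card (vars R1)} = card {1..card (vars R2)}" using cv by (rule arg_cong)
  then have card: "card (vars R1) = card (vars R2)" by simp
  have fin1: "finite (vars R1)" using T1 unfolding is_trs_def by blast
  have fin2: "finite (vars R2)" using T2 unfolding is_trs_def by blast
  have ex: "\<forall>\<rho>\<in>rules R1. \<exists>H. bij_betw H (vars R1) (vars R2) \<and> map_rule g H \<rho> \<in> rules R2"
  proof
    fix \<rho> assume \<rho>: "\<rho> \<in> rules R1"
    obtain l r where lr: "\<rho> = (l, r)" by (cases \<rho>)
    have "map_rule g id (nu_rule \<rho>) \<in> map_rule g id ` nu_rule ` rules R1" using \<rho> by (intro imageI)
    then have "map_rule g id (nu_rule \<rho>) \<in> nu_rule ` rules R2" unfolding E .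
    then obtain \<rho>' where \<rho>': "\<rho>' \<in> rules R2" and e: "map_rule g id (nu_rule \<rho>) = nu_rule \<rho>'"
      by (rule imageE) (rule that, assumption+)
    obtain l' r' where lr': "\<rho>' = (l', r')" by (cases \<rho>')
    have tr: "set (vars_list l) \<subseteq> vars R1" "set (vars_list r) \<subseteq> set (vars_list l)"
      using trs_rule[OF T1 \<rho>[unfolded lr]] by auto
    have tr': "set (vars_list l') \<subseteq> vars R2" "set (vars_list r') \<subseteq> set (vars_list l')"
      using trs_rule[OF T2 \<rho>'[unfolded lr']] by auto
    have e': "map_rule g id (nu_rule (l, r)) = nu_rule (l', r')" using e unfolding lr lr' .
    from nu_core[OF tr tr' fin1 fin2 card e'] obtain H where
      H12: "bij_betw H (vars R1) (vars R2) \<and> map_rule g H (l, r) = (l', r')" ..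
    note H1 = conjunct1[OF H12] and H2 = conjunct2[OF H12]
    have "map_rule g H \<rho> \<in> rules R2" using \<rho>' unfolding lr lr' H2 .
    with H1 have "bij_betw H (vars R1) (vars R2) \<and> map_rule g H \<rho> \<in> rules R2" by (rule conjI)
    then show "\<exists>H. bij_betw H (vars R1) (vars R2) \<and> map_rule g H \<rho> \<in> rules R2"
      by (rule exI[where x=H])
  qed
  from bchoice[OF ex] obtain H where H: "\<forall>\<rho>\<in>rules R1. bij_betw (H \<rho>) (vars R1) (vars R2) \<and> map_rule g (H \<rho>) \<rho> \<in> rules R2" ..
  have sub: "(\<lambda>\<rho>. map_rule g (H \<rho>) \<rho>) ` rules R1 \<subseteq> rules R2"
    by (rule image_subsetI) (use H in simp)
  have sup: "rules R2 \<subseteq> (\<lambda>\<rho>. map_rule g (H \<rho>) \<rho>) ` rules R1"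
  proof
    fix \<rho>' assume \<rho>': "\<rho>' \<in> rules R2"
    then have "nu_rule \<rho>' \<in> nu_rule ` rules R2" by (rule imageI)
    then have "nu_rule \<rho>' \<in> (\<lambda>x. map_rule g id (nu_rule x)) ` rules R1" unfolding E[symmetric] image_image .
    then obtain \<rho> where \<rho>: "\<rho> \<in> rules R1" and e: "nu_rule \<rho>' = map_rule g id (nu_rule \<rho>)"
      by (rule imageE) (rule that, assumption+)
    obtain l r where lr: "\<rho> = (l, r)" by (cases \<rho>)
    have tr: "set (vars_list l) \<subseteq> vars R1" "set (vars_list r) \<subseteq> set (vars_list l)"
      using trs_rule[OF T1 \<rho>[unfolded lr]] by auto
    define \<rho>'' where "\<rho>'' = map_rule g (H \<rho>) \<rho>"
    have \<rho>'': "\<rho>'' \<in> rules R2" using H \<rho> unfolding \<rho>''_def by simp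
    have "bij_betw (H \<rho>) (vars R1) (vars R2)" using H \<rho> by simp
    then have "inj_on (H \<rho>) (vars R1)" by (rule bij_betw_imp_inj_on)
    then have "inj_on (H \<rho>) (set (vars_list l))" using tr(1) by (rule inj_on_subset)
    then have "nu_rule \<rho>'' = map_rule g id (nu_rule \<rho>)"
      unfolding \<rho>''_def lr by (rule nu_map[OF _ tr(2)])
    then have e2: "map_rule id id (nu_rule \<rho>'') = nu_rule \<rho>'" using e by (simp add: map_rule_id)
    obtain l'' r'' where lr'': "\<rho>'' = (l'', r'')" by (cases \<rho>'')
    obtain l' r' where lr': "\<rho>' = (l', r')" by (cases \<rho>')
    have tr'': "set (vars_list l'') \<subseteq> vars R2" "set (vars_list r'') \<subseteq> set (vars_list l'')"
      using trs_rule[OF T2 \<rho>''[unfolded lr'']] by auto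
    have tr': "set (vars_list l') \<subseteq> vars R2" "set (vars_list r') \<subseteq> set (vars_list l')"
      using trs_rule[OF T2 \<rho>'[unfolded lr']] by auto
    have e2': "map_rule id id (nu_rule (l'', r'')) = nu_rule (l', r')" using e2 unfolding lr'' lr' .
    from nu_core[OF tr'' tr' fin2 fin2 refl e2'] obtain H' where
      H'12: "bij_betw H' (vars R2) (vars R2) \<and> map_rule id H' (l'', r'') = (l', r')" ..
    note H' = conjunct1[OF H'12] conjunct2[OF H'12]
    have "term_iso (funs R2) (arity R2) (vars R2) (funs R2) (arity R2) (vars R2) id H'"
      unfolding term_iso_def using H'(1) by simp
    moreover have "map_rule id H' \<rho>'' = \<rho>'" unfolding lr'' lr' by (rule H'(2))
    ultimately have "term_iso (funs R2) (arity R2) (vars R2) (funs R2) (arity R2) (vars R2) id H' \<and> map_rule id H' \<rho>'' = \<rho>'"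
      by (rule conjI)
    then have V: "V_equiv R2 \<rho>'' \<rho>'" unfolding V_equiv_def by (rule exI[where x=H'])
    have "\<rho>'' = \<rho>'"
    proof (rule ccontr)
      assume "\<rho>'' \<noteq> \<rho>'"
      then have "\<not> V_equiv R2 \<rho>'' \<rho>'" using N2 \<rho>'' \<rho>' unfolding V_normal_def by simp
      then show False using V by simp
    qed
    then have "\<rho>' = map_rule g (H \<rho>) \<rho>" unfolding \<rho>''_def by simp
    then show "\<rho>' \<in> (\<lambda>\<rho>. map_rule g (H \<rho>) \<rho>) ` rules R1" using \<rho> by (rule image_eqI)
  qed
  have "\<forall>\<rho>\<in>rules R1. term_iso (funs R1) (arity R1) (vars R1) (funs R2) (arity R2) (vars R2) g (H \<rho>)"
    unfolding term_iso_def using bg ar H by simp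
  moreover have "(\<lambda>\<rho>. map_rule g (H \<rho>) \<rho>) ` rules R1 = rules R2" using sub sup by (rule equalityI)
  ultimately have li': "local_iso R1 R2 (\<lambda>_. g) H" unfolding local_iso_def by (rule conjI)
  have "\<exists>g' H'. local_iso R1 R2 (\<lambda>_. g') H'" by (rule exI, rule exI, rule li')
  then show "SE_iso R1 R2" unfolding SE_iso_def using N1 N2 by simp
qed


lemma partB:
  fixes R1 :: "('f1, 'v1) trs" and R2 :: "('f2, 'v2) trs"
  assumes T1: "is_trs R1" and T2: "is_trs R2"
    and ne: "rules R1 \<noteq> {} \<or> rules R2 \<noteq> {}"
    and N1: "F_normal R1" and N2: "F_normal R2"
  shows "SVE_iso R1 R2 \<longleftrightarrow> GVE_iso (mu_template R1) (mu_template R2)"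
proof -
  have finF1: "finite (funs R1)" using T1 unfolding is_trs_def by blast
  have finF2: "finite (funs R2)" using T2 unfolding is_trs_def by blast
  show ?thesis
  proof
    assume "SVE_iso R1 R2"
    then obtain G h where li: "local_iso R1 R2 G (\<lambda>_. h)" unfolding SVE_iso_def by blast
    have ti: "\<And>\<rho>. \<rho> \<in> rules R1 \<Longrightarrow> term_iso (funs R1) (arity R1) (vars R1) (funs R2) (arity R2) (vars R2) (G \<rho>) h"
      using li unfolding local_iso_def by blast
    have img: "(\<lambda>\<rho>. map_rule (G \<rho>) h \<rho>) ` rules R1 = rules R2"
      using li unfolding local_iso_def by blast
    have "rules R1 \<noteq> {}" using ne img by auto
    then obtain \<rho>0 where \<rho>0: "\<rho>0 \<in> rules R1" by blast
    have bG0: "bij_betw (G \<rho>0) (funs R1) (funs R2)" and ar0: "\<forall>f\<in>funs R1. arity R2 (G \<rho>0 f) = arity R1 f"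
      and bh: "bij_betw h (vars R1) (vars R2)"
      using ti[OF \<rho>0] unfolding term_iso_def by auto
    have "\<forall>k. card {f\<in>funs R1. arity R1 f = k} = card {f\<in>funs R2. arity R2 f = k}"
      using cnt_bij[OF bG0 ar0] by blast
    then have std: "std_funs (funs R1) (arity R1) = std_funs (funs R2) (arity R2)"
      using std_eq_iff[OF finF1 finF2] by blast
    have "mu_rule (arity R2) ` rules R2 = mu_rule (arity R2) ` (\<lambda>\<rho>. map_rule (G \<rho>) h \<rho>) ` rules R1"
      using img by simp
    also have "\<dots> = (\<lambda>\<rho>. map_rule id h (mu_rule (arity R1) \<rho>)) ` rules R1"
      unfolding image_image
    proof (rule image_cong[OF refl])
      fix \<rho> assume \<rho>: "\<rho> \<in> rules R1"
      obtain l r where lr: "\<rho> = (l, r)" by (cases \<rho>)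
      have tr: "set (funs_list l) \<union> set (funs_list r) \<subseteq> funs R1"
        using trs_rule[OF T1 \<rho>[unfolded lr]] by auto
      have tiG: "bij_betw (G \<rho>) (funs R1) (funs R2)" "\<forall>f\<in>funs R1. arity R2 (G \<rho> f) = arity R1 f"
        using ti[OF \<rho>] unfolding term_iso_def by auto
      have "inj_on (G \<rho>) (funs R1)" using tiG(1) by (rule bij_betw_imp_inj_on)
      then have inj: "inj_on (G \<rho>) (set (funs_list l) \<union> set (funs_list r))" using tr by (rule inj_on_subset)
      have ar: "\<forall>f \<in> set (funs_list l) \<union> set (funs_list r). arity R2 (G \<rho> f) = arity R1 f"
        using tiG(2) tr by blast
      have X: "mu_rule (arity R2) (map_rule (G \<rho>) h (l, r)) = map_rule id h (mu_rule (arity R1) (l, r))"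
        by (rule mu_map[OF inj ar])
      show "mu_rule (arity R2) (map_rule (G \<rho>) h \<rho>) = map_rule id h (mu_rule (arity R1) \<rho>)"
        using X unfolding lr .
    qed
    also have "\<dots> = map_rule id h ` mu_rule (arity R1) ` rules R1" by (simp add: image_image)
    finally have E: "map_rule id h ` mu_rule (arity R1) ` rules R1 = mu_rule (arity R2) ` rules R2" by simp
    have "bij_betw id (std_funs (funs R1) (arity R1)) (std_funs (funs R2) (arity R2))"
      unfolding std by simp
    then have "term_iso (std_funs (funs R1) (arity R1)) snd (vars R1) (std_funs (funs R2) (arity R2)) snd (vars R2) id h"
      unfolding term_iso_def using bh by simp
    then have "term_iso (std_funs (funs R1) (arity R1)) snd (vars R1) (std_funs (funs R2) (arity R2)) snd (vars R2) id h
       \<and> map_rule id h ` mu_rule (arity R1) ` rules R1 = mu_rule (arity R2) ` rules R2"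
      using E by (rule conjI)
    then have ex: "\<exists>h'. term_iso (std_funs (funs R1) (arity R1)) snd (vars R1) (std_funs (funs R2) (arity R2)) snd (vars R2) id h'
       \<and> map_rule id h' ` mu_rule (arity R1) ` rules R1 = mu_rule (arity R2) ` rules R2"
      by (rule exI[where x=h])
    have "std_funs (funs R1) (arity R1) = std_funs (funs R2) (arity R2) \<and>
       (\<forall>f\<in>std_funs (funs R1) (arity R1). snd f = snd f) \<and>
       (\<exists>h'. term_iso (std_funs (funs R1) (arity R1)) snd (vars R1) (std_funs (funs R2) (arity R2)) snd (vars R2) id h'
       \<and> map_rule id h' ` mu_rule (arity R1) ` rules R1 = mu_rule (arity R2) ` rules R2)"
      by (rule conjI[OF std conjI[OF _ ex]]) simp
    then show "GVE_iso (mu_template R1) (mu_template R2)"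
      unfolding GVE_iso_def mu_template_def trs.simps .
  next
    assume "GVE_iso (mu_template R1) (mu_template R2)"
    then have GG: "std_funs (funs R1) (arity R1) = std_funs (funs R2) (arity R2) \<and>
       (\<forall>f\<in>std_funs (funs R1) (arity R1). snd f = snd f) \<and>
       (\<exists>h. term_iso (std_funs (funs R1) (arity R1)) snd (vars R1) (std_funs (funs R2) (arity R2)) snd (vars R2) id h \<and>
          map_rule id h ` mu_rule (arity R1) ` rules R1 = mu_rule (arity R2) ` rules R2)"
      unfolding GVE_iso_def mu_template_def trs.simps .
    from GG have std: "std_funs (funs R1) (arity R1) = std_funs (funs R2) (arity R2)" by (rule conjunct1)
    from GG have "\<exists>h. term_iso (std_funs (funs R1) (arity R1)) snd (vars R1) (std_funs (funs R2) (arity R2)) snd (vars R2) id h \<and>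
          map_rule id h ` mu_rule (arity R1) ` rules R1 = mu_rule (arity R2) ` rules R2"
      by (rule conjunct2[THEN conjunct2])
    then obtain h where tih: "term_iso (std_funs (funs R1) (arity R1)) snd (vars R1) (std_funs (funs R2) (arity R2)) snd (vars R2) id h"
      and E: "map_rule id h ` mu_rule (arity R1) ` rules R1 = mu_rule (arity R2) ` rules R2" by blast
    have bh: "bij_betw h (vars R1) (vars R2)" using tih unfolding term_iso_def by simp
    have cntA: "\<forall>k. card {f\<in>funs R1. arity R1 f = k} = card {f\<in>funs R2. arity R2 f = k}"
      using std std_eq_iff[OF finF1 finF2] by blast
    have cnt: "\<And>k. card {f\<in>funs R1. arity R1 f = k} = card {f\<in>funs R2. arity R2 f = k}"
      using cntA by blast
    have cnt2: "\<And>k. card {f\<in>funs R2. arity R2 f = k} = card {f\<in>funs R2. arity R2 f = k}"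
      by (rule refl)
    have ex: "\<forall>\<rho>\<in>rules R1. \<exists>G. bij_betw G (funs R1) (funs R2) \<and> (\<forall>f\<in>funs R1. arity R2 (G f) = arity R1 f)
        \<and> map_rule G h \<rho> \<in> rules R2"
    proof
      fix \<rho> assume \<rho>: "\<rho> \<in> rules R1"
      obtain l r where lr: "\<rho> = (l, r)" by (cases \<rho>)
      have "map_rule id h (mu_rule (arity R1) \<rho>) \<in> map_rule id h ` mu_rule (arity R1) ` rules R1"
        using \<rho> by (intro imageI)
      then have "map_rule id h (mu_rule (arity R1) \<rho>) \<in> mu_rule (arity R2) ` rules R2" unfolding E .
      then obtain \<rho>' where \<rho>': "\<rho>' \<in> rules R2" and e: "map_rule id h (mu_rule (arity R1) \<rho>) = mu_rule (arity R2) \<rho>'"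
        by (rule imageE) (rule that, assumption+)
      obtain l' r' where lr': "\<rho>' = (l', r')" by (cases \<rho>')
      have tr: "set (funs_list l) \<union> set (funs_list r) \<subseteq> funs R1"
        using trs_rule[OF T1 \<rho>[unfolded lr]] by auto
      have tr': "set (funs_list l') \<union> set (funs_list r') \<subseteq> funs R2"
        using trs_rule[OF T2 \<rho>'[unfolded lr']] by auto
      have e': "map_rule id h (mu_rule (arity R1) (l, r)) = mu_rule (arity R2) (l', r')" using e unfolding lr lr' .
      from mu_core[OF tr tr' finF1 finF2 cnt e'] obtain G where
        G: "bij_betw G (funs R1) (funs R2) \<and> (\<forall>f\<in>funs R1. arity R2 (G f) = arity R1 f) \<and> map_rule G h (l, r) = (l', r')" ..
      have "map_rule G h \<rho> \<in> rules R2" using \<rho>' unfolding lr lr' G[THEN conjunct2, THEN conjunct2] .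
      with G have "bij_betw G (funs R1) (funs R2) \<and> (\<forall>f\<in>funs R1. arity R2 (G f) = arity R1 f) \<and> map_rule G h \<rho> \<in> rules R2"
        by simp
      then show "\<exists>G. bij_betw G (funs R1) (funs R2) \<and> (\<forall>f\<in>funs R1. arity R2 (G f) = arity R1 f) \<and> map_rule G h \<rho> \<in> rules R2"
        by (rule exI[where x=G])
    qed
    from bchoice[OF ex] obtain G where G: "\<forall>\<rho>\<in>rules R1. bij_betw (G \<rho>) (funs R1) (funs R2) \<and>
        (\<forall>f\<in>funs R1. arity R2 (G \<rho> f) = arity R1 f) \<and> map_rule (G \<rho>) h \<rho> \<in> rules R2" ..
    have sub: "(\<lambda>\<rho>. map_rule (G \<rho>) h \<rho>) ` rules R1 \<subseteq> rules R2"
      by (rule image_subsetI) (use G in simp)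
    have sup: "rules R2 \<subseteq> (\<lambda>\<rho>. map_rule (G \<rho>) h \<rho>) ` rules R1"
    proof
      fix \<rho>' assume \<rho>': "\<rho>' \<in> rules R2"
      then have "mu_rule (arity R2) \<rho>' \<in> mu_rule (arity R2) ` rules R2" by (rule imageI)
      then have "mu_rule (arity R2) \<rho>' \<in> (\<lambda>x. map_rule id h (mu_rule (arity R1) x)) ` rules R1"
        unfolding E[symmetric] image_image .
      then obtain \<rho> where \<rho>: "\<rho> \<in> rules R1" and e: "mu_rule (arity R2) \<rho>' = map_rule id h (mu_rule (arity R1) \<rho>)"
        by (rule imageE) (rule that, assumption+)
      obtain l r where lr: "\<rho> = (l, r)" by (cases \<rho>)
      have tr: "set (funs_list l) \<union> set (funs_list r) \<subseteq> funs R1"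
        using trs_rule[OF T1 \<rho>[unfolded lr]] by auto
      define \<rho>'' where "\<rho>'' = map_rule (G \<rho>) h \<rho>"
      have \<rho>'': "\<rho>'' \<in> rules R2" using G \<rho> unfolding \<rho>''_def by simp
      have Gb: "bij_betw (G \<rho>) (funs R1) (funs R2)" using G \<rho> by simp
      have Ga: "\<forall>f\<in>funs R1. arity R2 (G \<rho> f) = arity R1 f" using G \<rho> by simp
      have "inj_on (G \<rho>) (funs R1)" using Gb by (rule bij_betw_imp_inj_on)
      then have inj: "inj_on (G \<rho>) (set (funs_list l) \<union> set (funs_list r))" using tr by (rule inj_on_subset)
      have ar: "\<forall>f \<in> set (funs_list l) \<union> set (funs_list r). arity R2 (G \<rho> f) = arity R1 f"
        using Ga tr by blast
      have X: "mu_rule (arity R2) (map_rule (G \<rho>) h (l, r)) = map_rule id h (mu_rule (arity R1) (l, r))"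
        by (rule mu_map[OF inj ar])
      have "mu_rule (arity R2) \<rho>'' = map_rule id h (mu_rule (arity R1) \<rho>)"
        using X unfolding \<rho>''_def lr .
      then have e2: "map_rule id id (mu_rule (arity R2) \<rho>'') = mu_rule (arity R2) \<rho>'" using e by (simp add: map_rule_id)
      obtain l'' r'' where lr'': "\<rho>'' = (l'', r'')" by (cases \<rho>'')
      obtain l' r' where lr': "\<rho>' = (l', r')" by (cases \<rho>')
      have tr'': "set (funs_list l'') \<union> set (funs_list r'') \<subseteq> funs R2"
        using trs_rule[OF T2 \<rho>''[unfolded lr'']] by auto
      have tr': "set (funs_list l') \<union> set (funs_list r') \<subseteq> funs R2"
        using trs_rule[OF T2 \<rho>'[unfolded lr']] by auto
      have e2': "map_rule id id (mu_rule (arity R2) (l'', r'')) = mu_rule (arity R2) (l', r')"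
        using e2 unfolding lr'' lr' .
      from mu_core[OF tr'' tr' finF2 finF2 cnt2 e2'] obtain G' where
        G'12: "bij_betw G' (funs R2) (funs R2) \<and> (\<forall>f\<in>funs R2. arity R2 (G' f) = arity R2 f) \<and> map_rule G' id (l'', r'') = (l', r')" ..
      have "term_iso (funs R2) (arity R2) (vars R2) (funs R2) (arity R2) (vars R2) G' id"
        unfolding term_iso_def using G'12 by simp
      moreover have "map_rule G' id \<rho>'' = \<rho>'" unfolding lr'' lr' by (rule G'12[THEN conjunct2, THEN conjunct2])
      ultimately have "term_iso (funs R2) (arity R2) (vars R2) (funs R2) (arity R2) (vars R2) G' id \<and> map_rule G' id \<rho>'' = \<rho>'"
        by (rule conjI)
      then have V: "F_equiv R2 \<rho>'' \<rho>'" unfolding F_equiv_def by (rule exI[where x=G'])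
      have "\<rho>'' = \<rho>'"
      proof (rule ccontr)
        assume "\<rho>'' \<noteq> \<rho>'"
        then have "\<not> F_equiv R2 \<rho>'' \<rho>'" using N2 \<rho>'' \<rho>' unfolding F_normal_def by simp
        then show False using V by simp
      qed
      then have "\<rho>' = map_rule (G \<rho>) h \<rho>" unfolding \<rho>''_def by simp
      then show "\<rho>' \<in> (\<lambda>\<rho>. map_rule (G \<rho>) h \<rho>) ` rules R1" using \<rho> by (rule image_eqI)
    qed
    have "\<forall>\<rho>\<in>rules R1. term_iso (funs R1) (arity R1) (vars R1) (funs R2) (arity R2) (vars R2) (G \<rho>) h"
      unfolding term_iso_def using bh G by simp
    moreover have "(\<lambda>\<rho>. map_rule (G \<rho>) h \<rho>) ` rules R1 = rules R2" using sub sup by (rule equalityI)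
    ultimately have li': "local_iso R1 R2 G (\<lambda>_. h)" unfolding local_iso_def by (rule conjI)
    have "\<exists>G' h'. local_iso R1 R2 G' (\<lambda>_. h')" by (rule exI, rule exI, rule li')
    then show "SVE_iso R1 R2" unfolding SVE_iso_def using N1 N2 by simp
  qed
qed

theorem mainTheorem11:
  fixes R1 :: "('f1, 'v1) trs" and R2 :: "('f2, 'v2) trs"
  assumes "is_trs R1" and "is_trs R2"
    and "rules R1 \<noteq> {} \<or> rules R2 \<noteq> {}"
  shows "(V_normal R1 \<and> V_normal R2 \<longrightarrow>
            (SE_iso R1 R2 \<longleftrightarrow> GFE_iso (nu_template R1) (nu_template R2)))
       \<and> (F_normal R1 \<and> F_normal R2 \<longrightarrow>
            (SVE_iso R1 R2 \<longleftrightarrow> GVE_iso (mu_template R1) (mu_template R2)))"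
  using partA[OF assms] partB[OF assms] by blast

end
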